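(* Let $H$ be an oriented graph on $h$ vertices. Consider any labeling of the vertices of $H$ by $1,\dots,h$ and let $G$ be the corresponding backedge graph. Then for every order-preserving homomorphism $f:G\to K(H)$ there is a set $X\subseteq V(H)$ such that $f|_X$ is a graph isomorphism onto $K(H)$.
   Context: Graphs are undirected with vertex sets that are subsets of $\mathbb{N}$; subgraphs inherit labels. Given a labeling of $V(H)$ by $1,\dots,h$, the backedge graph of $H$ is the undirected graph on $[h]$ with $\{i,j\}$ an edge iff $i<j$ and $j\to i$ in $H$. An order-preserving homomorphism from $G$ to $G'$ is a map $f:V(G)\to V(G')$ with $f(i)\le f(j)$ whenever $i\le j$ and mapping edges to edges; an order-preserving isomorphism is one that is also a graph isomorphism. The ordered core of $G$ is a subgraph of $G$ with the fewest vertices among subgraphs to which $G$ has an order-preserving homomorphism. Let $\mathcal{C}(H)$ be the set of ordered cores of the backedge graphs of $H$ over all $h!$ labelings of $V(H)$ by $1,\dots,h$. $K(H)$ denotes a fixed element of $\mathcal{C}(H)$ that is maximal in the sense that for every $C\in\mathcal{C}(H)$, if there is an order-preserving homomorphism from $C$ to $K(H)$ then there is an order-preserving isomorphism between $C$ and $K(H)$. *)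

theory Defs
  imports Main
begin

record ugraph =
  verts :: "nat set"
  edges :: "nat set set"

definition oriented_graph :: "'a set \<Rightarrow> ('a \<times> 'a) set \<Rightarrow> bool" where
  "oriented_graph V A \<longleftrightarrow> finite V \<and> A \<subseteq> V \<times> V \<and>
     (\<forall>u. (u, u) \<notin> A) \<and> (\<forall>u v. (u, v) \<in> A \<longrightarrow> (v, u) \<notin> A)"

definition labeling :: "'a set \<Rightarrow> ('a \<Rightarrow> nat) \<Rightarrow> bool" where
  "labeling V \<sigma> \<longleftrightarrow> bij_betw \<sigma> V {1..card V}"

definition backedge_graph :: "'a set \<Rightarrow> ('a \<times> 'a) set \<Rightarrow> ('a \<Rightarrow> nat) \<Rightarrow> ugraph" where
  "backedge_graph V A \<sigma> =
     \<lparr> verts = {1..card V},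
       edges = {{i, j} | i j. i \<in> {1..card V} \<and> j \<in> {1..card V} \<and> i < j \<and>
                              (inv_into V \<sigma> j, inv_into V \<sigma> i) \<in> A} \<rparr>"

definition op_hom :: "(nat \<Rightarrow> nat) \<Rightarrow> ugraph \<Rightarrow> ugraph \<Rightarrow> bool" where
  "op_hom f G G' \<longleftrightarrow> f ` verts G \<subseteq> verts G' \<and>
     (\<forall>i\<in>verts G. \<forall>j\<in>verts G. i \<le> j \<longrightarrow> f i \<le> f j) \<and>
     (\<forall>i j. {i, j} \<in> edges G \<longrightarrow> {f i, f j} \<in> edges G')"

definition op_iso :: "(nat \<Rightarrow> nat) \<Rightarrow> ugraph \<Rightarrow> ugraph \<Rightarrow> bool" where
  "op_iso f G G' \<longleftrightarrow> op_hom f G G' \<and> bij_betw f (verts G) (verts G') \<and>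
     (\<forall>i\<in>verts G. \<forall>j\<in>verts G. {f i, f j} \<in> edges G' \<longrightarrow> {i, j} \<in> edges G)"

definition subgraph :: "ugraph \<Rightarrow> ugraph \<Rightarrow> bool" where
  "subgraph S G \<longleftrightarrow> verts S \<subseteq> verts G \<and> edges S \<subseteq> edges G \<and> (\<forall>e\<in>edges S. e \<subseteq> verts S)"

definition ordered_core :: "ugraph \<Rightarrow> ugraph \<Rightarrow> bool" where
  "ordered_core G C \<longleftrightarrow> subgraph C G \<and> (\<exists>f. op_hom f G C) \<and>
     (\<forall>S. subgraph S G \<and> (\<exists>f. op_hom f G S) \<longrightarrow> card (verts C) \<le> card (verts S))"

definition core_set :: "'a set \<Rightarrow> ('a \<times> 'a) set \<Rightarrow> ugraph set" where
  "core_set V A = {C. \<exists>\<sigma>. labeling V \<sigma> \<and> ordered_core (backedge_graph V A \<sigma>) C}"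

definition maximal_core :: "'a set \<Rightarrow> ('a \<times> 'a) set \<Rightarrow> ugraph \<Rightarrow> bool" where
  "maximal_core V A K \<longleftrightarrow> K \<in> core_set V A \<and>
     (\<forall>C\<in>core_set V A. (\<exists>f. op_hom f C K) \<longrightarrow> (\<exists>g. op_iso g C K))"

end

theory Submission
  imports Defs
begin

lemma op_hom_comp:
  assumes "op_hom p G S" "op_hom q S T"
  shows "op_hom (q \<circ> p) G T"
  using assms unfolding op_hom_def by (auto simp: image_subset_iff)

lemma inj_edges:
  assumes fin: "finite (verts C)"
    and pairs: "\<forall>e\<in>edges C. \<exists>i j. e = {i,j}"
    and sub: "\<forall>e\<in>edges C. e \<subseteq> verts C"
    and bij: "bij_betw h (verts C) (verts C)"
    and hom: "\<forall>i j. {i, j} \<in> edges C \<longrightarrow> {h i, h j} \<in> edges C"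
    and ij: "i \<in> verts C" "j \<in> verts C" "{h i, h j} \<in> edges C"
  shows "{i,j} \<in> edges C"
proof -
  have injv: "inj_on h (verts C)" using bij bij_betw_def by blast
  have finE: "finite (edges C)"
    by (rule finite_subset[of _ "Pow (verts C)"]) (use sub fin in auto)
  have injE: "inj_on (\<lambda>e. h ` e) (edges C)"
  proof (rule inj_onI)
    fix a b assume a: "a \<in> edges C" and b: "b \<in> edges C" and e: "h ` a = h ` b"
    have "a \<subseteq> verts C" "b \<subseteq> verts C" using sub a b by auto
    then show "a = b" using inj_on_image_eq_iff[OF injv] e by blast
  qed
  have img: "(\<lambda>e. h ` e) ` edges C \<subseteq> edges C"
  proof
    fix x assume "x \<in> (\<lambda>e. h ` e) ` edges C"
    then obtain e where e: "e \<in> edges C" "x = h ` e" by auto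
    then obtain a b where "e = {a,b}" using pairs by blast
    then show "x \<in> edges C" using e hom by auto
  qed
  have "card ((\<lambda>e. h ` e) ` edges C) = card (edges C)" using card_image[OF injE] .
  hence eq: "(\<lambda>e. h ` e) ` edges C = edges C"
    using card_subset_eq[OF finE img] by simp
  have "h ` {i,j} \<in> edges C" using ij by simp
  then obtain e where e: "e \<in> edges C" "h ` {i,j} = h ` e" using eq by (metis imageE)
  have "e \<subseteq> verts C" using sub e by auto
  moreover have "{i,j} \<subseteq> verts C" using ij by simp
  ultimately have "{i,j} = e" using inj_on_image_eq_iff[OF injv] e(2) by blast
  thus ?thesis using e by simp
qed

lemma main:
  assumes fin: "finite (verts G)"
    and pairs: "\<forall>e\<in>edges G. \<exists>i j. e = {i,j}"
    and oc: "ordered_core G C"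
    and iso: "op_iso g C K"
    and fh: "op_hom f G K"
  shows "\<exists>X \<subseteq> verts G. bij_betw f X (verts K) \<and>
           (\<forall>i\<in>X. \<forall>j\<in>X. {i, j} \<in> edges G \<longleftrightarrow> {f i, f j} \<in> edges K)"
proof -
  have sg: "subgraph C G" using oc unfolding ordered_core_def by blast
  obtain \<phi> where phi: "op_hom \<phi> G C" using oc unfolding ordered_core_def by blast
  have minc: "\<And>S. subgraph S G \<Longrightarrow> op_hom p G S \<Longrightarrow> card (verts C) \<le> card (verts S)" for p
    using oc unfolding ordered_core_def by blast
  have vCG: "verts C \<subseteq> verts G" and eCG: "edges C \<subseteq> edges G"
    and eCv: "\<forall>e\<in>edges C. e \<subseteq> verts C" using sg unfolding subgraph_def by auto
  have finC: "finite (verts C)" using fin vCG finite_subset by blast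
  have gbij: "bij_betw g (verts C) (verts K)" using iso unfolding op_iso_def by blast
  have gmono: "\<forall>i\<in>verts C. \<forall>j\<in>verts C. i \<le> j \<longrightarrow> g i \<le> g j"
    using iso unfolding op_iso_def op_hom_def by blast
  have gback: "\<forall>i\<in>verts C. \<forall>j\<in>verts C. {g i, g j} \<in> edges K \<longrightarrow> {i, j} \<in> edges C"
    using iso unfolding op_iso_def by blast
  have fv: "f ` verts G \<subseteq> verts K" and fmono: "\<forall>i\<in>verts G. \<forall>j\<in>verts G. i \<le> j \<longrightarrow> f i \<le> f j"
    and fe: "\<forall>i j. {i, j} \<in> edges G \<longrightarrow> {f i, f j} \<in> edges K" using fh unfolding op_hom_def by auto
  define gi where "gi = inv_into (verts C) g"
  define h where "h = gi \<circ> f"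
  have gi_in: "y \<in> verts K \<Longrightarrow> gi y \<in> verts C" for y
    unfolding gi_def using gbij by (metis bij_betw_def inv_into_into)
  have g_gi: "y \<in> verts K \<Longrightarrow> g (gi y) = y" for y
    unfolding gi_def using gbij by (metis bij_betw_def f_inv_into_f)
  have gi_mono: "a \<in> verts K \<Longrightarrow> b \<in> verts K \<Longrightarrow> a \<le> b \<Longrightarrow> gi a \<le> gi b" for a b
  proof (rule ccontr)
    assume a: "a \<in> verts K" "b \<in> verts K" "a \<le> b" "\<not> gi a \<le> gi b"
    hence "g (gi b) \<le> g (gi a)" using gmono gi_in by auto
    hence "a = b" using a g_gi by auto
    thus False using a by simp
  qed
  have fC: "x \<in> verts C \<Longrightarrow> f x \<in> verts K" for x using fv vCG by auto
  have hC: "x \<in> verts C \<Longrightarrow> h x \<in> verts C" for x using fC gi_in h_def by auto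
  have hmono: "\<forall>i\<in>verts C. \<forall>j\<in>verts C. i \<le> j \<longrightarrow> h i \<le> h j"
    using fmono vCG fC gi_mono h_def by (auto simp: subset_iff)
  have hedge: "\<forall>i j. {i, j} \<in> edges C \<longrightarrow> {h i, h j} \<in> edges C"
  proof (intro allI impI)
    fix i j assume e: "{i,j} \<in> edges C"
    hence ij: "i \<in> verts C" "j \<in> verts C" using eCv by auto
    have "{f i, f j} \<in> edges K" using e eCG fe by auto
    moreover have "g (h i) = f i" "g (h j) = f j" using g_gi fC ij unfolding h_def comp_def by blast+
    ultimately have "{g (h i), g (h j)} \<in> edges K" by simp
    thus "{h i, h j} \<in> edges C" using gback[rule_format, OF hC[OF ij(1)] hC[OF ij(2)]] by blast
  qed
  have hhom: "op_hom h C C" unfolding op_hom_def using hC hmono hedge by auto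
  define S where "S = \<lparr>verts = h ` verts C, edges = (\<lambda>e. h ` e) ` edges C\<rparr>"
  have sS: "subgraph S G" unfolding subgraph_def S_def
  proof (intro conjI)
    show "verts \<lparr>verts = h ` verts C, edges = (`) h ` edges C\<rparr> \<subseteq> verts G"
      using hC vCG by auto
    show "edges \<lparr>verts = h ` verts C, edges = (`) h ` edges C\<rparr> \<subseteq> edges G"
    proof
      fix x assume "x \<in> edges \<lparr>verts = h ` verts C, edges = (`) h ` edges C\<rparr>"
      then obtain e where e: "e \<in> edges C" "x = h ` e" by auto
      then obtain a b where "e = {a,b}" using pairs eCG by blast
      then show "x \<in> edges G" using e hedge eCG by auto
    qed
    show "\<forall>e\<in>edges \<lparr>verts = h ` verts C, edges = (`) h ` edges C\<rparr>.
       e \<subseteq> verts \<lparr>verts = h ` verts C, edges = (`) h ` edges C\<rparr>"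
      using eCv by auto
  qed
  have hS: "op_hom h C S"
  proof -
    have "\<forall>i j. {i, j} \<in> edges C \<longrightarrow> {h i, h j} \<in> (\<lambda>e. h ` e) ` edges C"
    proof (intro allI impI)
      fix i j assume "{i,j} \<in> edges C"
      hence "h ` {i,j} \<in> (\<lambda>e. h ` e) ` edges C" by (rule imageI)
      thus "{h i, h j} \<in> (\<lambda>e. h ` e) ` edges C" by simp
    qed
    thus ?thesis unfolding op_hom_def S_def using hmono by simp
  qed
  have "card (verts C) \<le> card (verts S)" using minc[OF sS op_hom_comp[OF phi hS]] .
  hence "card (verts C) \<le> card (h ` verts C)" by (simp add: S_def)
  hence injh: "inj_on h (verts C)"
    using card_image_le[OF finC, of h] eq_card_imp_inj_on[OF finC, of h] by linarith
  have "h ` verts C = verts C"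
    using card_subset_eq[OF finC] hC card_image[OF injh] by (metis image_subsetI)
  hence hbij: "bij_betw h (verts C) (verts C)" using injh bij_betw_def by blast
  have pairsC: "\<forall>e\<in>edges C. \<exists>i j. e = {i,j}" using pairs eCG by blast
  have fbij: "bij_betw f (verts C) (verts K)"
  proof -
    have "bij_betw (g \<circ> h) (verts C) (verts K)" using bij_betw_trans[OF hbij gbij] .
    moreover have "\<forall>x\<in>verts C. (g \<circ> h) x = f x"
    proof
      fix x assume "x \<in> verts C"
      hence "g (gi (f x)) = f x" using g_gi fC by blast
      thus "(g \<circ> h) x = f x" unfolding h_def comp_def .
    qed
    ultimately show ?thesis using bij_betw_cong[of "verts C" "g \<circ> h" f] by simp
  qed
  show ?thesis
  proof (intro exI[of _ "verts C"] conjI ballI)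
    show "verts C \<subseteq> verts G" by (rule vCG)
    show "bij_betw f (verts C) (verts K)" by (rule fbij)
    fix i j assume ij: "i \<in> verts C" "j \<in> verts C"
    show "{i, j} \<in> edges G \<longleftrightarrow> {f i, f j} \<in> edges K"
    proof
      assume "{i,j} \<in> edges G" thus "{f i, f j} \<in> edges K" using fe by blast
    next
      assume "{f i, f j} \<in> edges K"
      moreover have "g (h i) = f i" "g (h j) = f j" using g_gi fC ij unfolding h_def comp_def by blast+
      ultimately have "{g (h i), g (h j)} \<in> edges K" by simp
      hence "{h i, h j} \<in> edges C" using gback[rule_format, OF hC[OF ij(1)] hC[OF ij(2)]] by blast
      hence "{i,j} \<in> edges C" using inj_edges[OF finC pairsC eCv hbij hedge ij] by blast
      thus "{i,j} \<in> edges G" using eCG by blast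
    qed
  qed
qed

theorem proposition4p6:
  fixes V :: "'a set" and A :: "('a \<times> 'a) set" and \<sigma> :: "'a \<Rightarrow> nat"
    and K :: ugraph and f :: "nat \<Rightarrow> nat"
  assumes "oriented_graph V A"
    and "maximal_core V A K"
    and "labeling V \<sigma>"
    and "op_hom f (backedge_graph V A \<sigma>) K"
  shows "\<exists>X \<subseteq> verts (backedge_graph V A \<sigma>).
           bij_betw f X (verts K) \<and>
           (\<forall>i\<in>X. \<forall>j\<in>X. {i, j} \<in> edges (backedge_graph V A \<sigma>) \<longleftrightarrow> {f i, f j} \<in> edges K)"
proof -
  define G where "G = backedge_graph V A \<sigma>"
  have fin: "finite (verts G)" by (simp add: G_def backedge_graph_def)
  have pairs: "\<forall>e\<in>edges G. \<exists>i j. e = {i,j}" by (auto simp: G_def backedge_graph_def)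
  let ?P = "\<lambda>S. subgraph S G \<and> (\<exists>p. op_hom p G S)"
  have "?P G" unfolding subgraph_def op_hom_def
    by (intro conjI exI[of _ id]) (auto simp: G_def backedge_graph_def)
  then obtain C where C: "?P C" and Cmin: "\<forall>S. ?P S \<longrightarrow> card (verts C) \<le> card (verts S)"
    using ex_has_least_nat[of ?P G "\<lambda>S. card (verts S)"] by blast
  have oc: "ordered_core G C" unfolding ordered_core_def using C Cmin by blast
  have Cin: "C \<in> core_set V A" unfolding core_set_def mem_Collect_eq
    by (intro exI[of _ \<sigma>] conjI assms(3) oc[unfolded G_def])
  have fG: "op_hom f G K" using assms(4) G_def by simp
  have sCG: "subgraph C G" using C by blast
  have vCG: "verts C \<subseteq> verts G" and eCG: "edges C \<subseteq> edges G"
    using sCG unfolding subgraph_def by auto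
  have fv: "f ` verts G \<subseteq> verts K" and fmono: "\<forall>i\<in>verts G. \<forall>j\<in>verts G. i \<le> j \<longrightarrow> f i \<le> f j"
    and fe: "\<forall>i j. {i, j} \<in> edges G \<longrightarrow> {f i, f j} \<in> edges K" using fG unfolding op_hom_def by auto
  have "f ` verts C \<subseteq> verts K" using fv vCG by blast
  moreover have "\<forall>i\<in>verts C. \<forall>j\<in>verts C. i \<le> j \<longrightarrow> f i \<le> f j" using fmono vCG by blast
  moreover have "\<forall>i j. {i, j} \<in> edges C \<longrightarrow> {f i, f j} \<in> edges K" using fe eCG by blast
  ultimately have "op_hom f C K" unfolding op_hom_def by blast
  moreover have "\<forall>C\<in>core_set V A. (\<exists>f. op_hom f C K) \<longrightarrow> (\<exists>g. op_iso g C K)"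
    using assms(2) unfolding maximal_core_def by blast
  ultimately obtain g where "op_iso g C K" using Cin by blast
  from main[OF fin pairs oc this fG] show ?thesis unfolding G_def .
qed

end
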